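(* Let $R$ be a commutative ring with $1\neq 0$ and $M$ a faithful prime $R$-module which is a comultiplication module satisfying the double annihilator condition (i.e., $M$ is $S$-strong comultiplication for $S=\{1\}$). If $N$ is a submodule of $M$ such that $N=(0:_M I)$ for some essential ideal $I$ of $R$, then $N$ is a small submodule of $M$.
   Context: All rings are commutative with $1\neq 0$ and all modules are unital. For an ideal $I$ of $R$, $(0:_M I)=\{m\in M: Im=0\}$; $\mathrm{Ann}_R(X)=\{r\in R: rX=0\}$; $M$ is faithful if $\mathrm{Ann}_R(M)=0$; $M$ is prime if $\mathrm{Ann}_R(L)=\mathrm{Ann}_R(M)$ for every nonzero submodule $L$ of $M$. $M$ is a comultiplication module if for each submodule $N$ of $M$ there is an ideal $I$ of $R$ with $N=(0:_M I)$. $M$ satisfies the double annihilator condition if $\mathrm{Ann}_R((0:_M I))\subseteq I$ for every ideal $I$ of $R$. An ideal $I$ is essential in $R$ if $I\cap J=0$ implies $J=0$ for ideals $J$; a submodule $N$ is small in $M$ if $M=N+L$ implies $L=M$. *)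

theory Defs
  imports "HOL-Algebra.Module" "HOL-Algebra.Ideal"
begin

definition ann_sub :: "('a, 'c) ring_scheme \<Rightarrow> ('a, 'b, 'd) module_scheme \<Rightarrow> 'a set \<Rightarrow> 'b set" where
  "ann_sub R M I = {m \<in> carrier M. \<forall>a\<in>I. a \<odot>\<^bsub>M\<^esub> m = \<zero>\<^bsub>M\<^esub>}"

definition Ann :: "('a, 'c) ring_scheme \<Rightarrow> ('a, 'b, 'd) module_scheme \<Rightarrow> 'b set \<Rightarrow> 'a set" where
  "Ann R M X = {r \<in> carrier R. \<forall>x\<in>X. r \<odot>\<^bsub>M\<^esub> x = \<zero>\<^bsub>M\<^esub>}"

definition faithful_module :: "('a, 'c) ring_scheme \<Rightarrow> ('a, 'b, 'd) module_scheme \<Rightarrow> bool" where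
  "faithful_module R M \<longleftrightarrow> Ann R M (carrier M) = {\<zero>\<^bsub>R\<^esub>}"

definition prime_module :: "('a, 'c) ring_scheme \<Rightarrow> ('a, 'b, 'd) module_scheme \<Rightarrow> bool" where
  "prime_module R M \<longleftrightarrow>
     (\<forall>L. submodule L R M \<and> L \<noteq> {\<zero>\<^bsub>M\<^esub>} \<longrightarrow> Ann R M L = Ann R M (carrier M))"

definition comultiplication_module :: "('a, 'c) ring_scheme \<Rightarrow> ('a, 'b, 'd) module_scheme \<Rightarrow> bool" where
  "comultiplication_module R M \<longleftrightarrow>
     (\<forall>N. submodule N R M \<longrightarrow> (\<exists>I. ideal I R \<and> N = ann_sub R M I))"

definition double_annihilator_condition :: "('a, 'c) ring_scheme \<Rightarrow> ('a, 'b, 'd) module_scheme \<Rightarrow> bool" where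
  "double_annihilator_condition R M \<longleftrightarrow>
     (\<forall>I. ideal I R \<longrightarrow> Ann R M (ann_sub R M I) \<subseteq> I)"

definition essential_ideal :: "'a set \<Rightarrow> ('a, 'c) ring_scheme \<Rightarrow> bool" where
  "essential_ideal I R \<longleftrightarrow> ideal I R \<and>
     (\<forall>J. ideal J R \<longrightarrow> I \<inter> J = {\<zero>\<^bsub>R\<^esub>} \<longrightarrow> J = {\<zero>\<^bsub>R\<^esub>})"

definition submodule_sum :: "('a, 'b, 'd) module_scheme \<Rightarrow> 'b set \<Rightarrow> 'b set \<Rightarrow> 'b set" where
  "submodule_sum M N L = {n \<oplus>\<^bsub>M\<^esub> l | n l. n \<in> N \<and> l \<in> L}"

definition small_submodule :: "'b set \<Rightarrow> ('a, 'c) ring_scheme \<Rightarrow> ('a, 'b, 'd) module_scheme \<Rightarrow> bool" where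
  "small_submodule N R M \<longleftrightarrow> submodule N R M \<and>
     (\<forall>L. submodule L R M \<longrightarrow> submodule_sum M N L = carrier M \<longrightarrow> L = carrier M)"

end

theory Submission
  imports Defs
begin

lemma ann_sub_submodule:
  assumes "module R M" "I \<subseteq> carrier R"
  shows "submodule (ann_sub R M I) R M"
proof -
  interpret module R M by fact
  show ?thesis
  proof (rule submoduleI)
    show "ann_sub R M I \<subseteq> carrier M" by (auto simp: ann_sub_def)
    show "\<zero>\<^bsub>M\<^esub> \<in> ann_sub R M I" using assms(2) by (auto simp: ann_sub_def)
    fix a assume a: "a \<in> ann_sub R M I"
    show "\<ominus>\<^bsub>M\<^esub> a \<in> ann_sub R M I"
      using a assms(2) by (auto simp: ann_sub_def smult_r_minus subsetD)
  next
    fix a b assume a: "a \<in> ann_sub R M I" and b: "b \<in> ann_sub R M I"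
    then show "a \<oplus>\<^bsub>M\<^esub> b \<in> ann_sub R M I"
      using assms(2) by (auto simp: ann_sub_def smult_r_distr subsetD)
  next
    fix a x assume a: "a \<in> carrier R" and x: "x \<in> ann_sub R M I"
    have "\<forall>b\<in>I. b \<odot>\<^bsub>M\<^esub> (a \<odot>\<^bsub>M\<^esub> x) = \<zero>\<^bsub>M\<^esub>"
    proof
      fix b assume b: "b \<in> I"
      then have bc: "b \<in> carrier R" using assms(2) by blast
      have xc: "x \<in> carrier M" using x by (auto simp: ann_sub_def)
      have "b \<odot>\<^bsub>M\<^esub> (a \<odot>\<^bsub>M\<^esub> x) = (b \<otimes>\<^bsub>R\<^esub> a) \<odot>\<^bsub>M\<^esub> x"
        using bc a xc by (simp add: smult_assoc1)
      also have "\<dots> = a \<odot>\<^bsub>M\<^esub> (b \<odot>\<^bsub>M\<^esub> x)"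
        using bc a xc by (simp add: smult_assoc1 R.m_comm)
      also have "\<dots> = \<zero>\<^bsub>M\<^esub>" using x b a by (auto simp: ann_sub_def)
      finally show "b \<odot>\<^bsub>M\<^esub> (a \<odot>\<^bsub>M\<^esub> x) = \<zero>\<^bsub>M\<^esub>" .
    qed
    then show "a \<odot>\<^bsub>M\<^esub> x \<in> ann_sub R M I"
      using a x by (auto simp: ann_sub_def)
  qed
qed

lemma Ann_ideal:
  assumes "module R M" "X \<subseteq> carrier M"
  shows "ideal (Ann R M X) R"
proof -
  interpret module R M by fact
  show ?thesis
  proof (rule idealI)
    show "ring R" by (rule R.ring_axioms)
    show "subgroup (Ann R M X) (add_monoid R)"
    proof
      show "Ann R M X \<subseteq> carrier (add_monoid R)" by (auto simp: Ann_def)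
      show "\<one>\<^bsub>add_monoid R\<^esub> \<in> Ann R M X" using assms(2) by (auto simp: Ann_def)
      fix x y assume x: "x \<in> Ann R M X" and y: "y \<in> Ann R M X"
      then show "x \<otimes>\<^bsub>add_monoid R\<^esub> y \<in> Ann R M X"
        using assms(2) by (auto simp: Ann_def smult_l_distr subsetD)
    next
      fix x assume x: "x \<in> Ann R M X"
      then show "inv\<^bsub>add_monoid R\<^esub> x \<in> Ann R M X"
        using assms(2) by (auto simp: Ann_def smult_l_minus subsetD a_inv_def[symmetric])
    qed
  next
    fix a x assume a: "a \<in> Ann R M X" and x: "x \<in> carrier R"
    then show "x \<otimes>\<^bsub>R\<^esub> a \<in> Ann R M X"
      using assms(2) by (auto simp: Ann_def smult_assoc1 subsetD)
    then show "a \<otimes>\<^bsub>R\<^esub> x \<in> Ann R M X"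
      using a x by (auto simp: Ann_def R.m_comm)
  qed
qed

theorem proposition2p4:
  fixes R :: "('a, 'c) ring_scheme" and M :: "('a, 'b, 'd) module_scheme"
  assumes "module R M"
    and "\<one>\<^bsub>R\<^esub> \<noteq> \<zero>\<^bsub>R\<^esub>"
    and "faithful_module R M"
    and "prime_module R M"
    and "comultiplication_module R M"
    and "double_annihilator_condition R M"
    and "essential_ideal I R"
    and "N = ann_sub R M I"
  shows "small_submodule N R M"
proof -
  interpret module R M by fact
  have Iid: "ideal I R" using assms(7) by (simp add: essential_ideal_def)
  then have Ic: "I \<subseteq> carrier R" by (rule ideal.axioms(1)[THEN additive_subgroup.a_subset])
  have Nsub: "submodule N R M" using ann_sub_submodule[OF assms(1) Ic] assms(8) by simp
  show ?thesis unfolding small_submodule_def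
  proof (intro conjI allI impI)
    show "submodule N R M" by fact
    fix L assume L: "submodule L R M" and sum: "submodule_sum M N L = carrier M"
    have Lc: "L \<subseteq> carrier M" using L using submodule.axioms(1) subgroup.subset by fastforce
    have Nc: "N \<subseteq> carrier M" using Nsub using submodule.axioms(1) subgroup.subset by fastforce
    define K where "K = Ann R M L"
    have Kid: "ideal K R" unfolding K_def by (rule Ann_ideal[OF assms(1) Lc])
    have "I \<inter> K = {\<zero>\<^bsub>R\<^esub>}"
    proof
      show "{\<zero>\<^bsub>R\<^esub>} \<subseteq> I \<inter> K"
        using Iid Kid by (simp add: additive_subgroup.zero_closed ideal.axioms(1))
      show "I \<inter> K \<subseteq> {\<zero>\<^bsub>R\<^esub>}"
      proof
        fix r assume r: "r \<in> I \<inter> K"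
        then have rc: "r \<in> carrier R" using Ic by blast
        have "r \<in> Ann R M (carrier M)"
          unfolding Ann_def
        proof (intro CollectI conjI ballI rc)
          fix m assume "m \<in> carrier M"
          then obtain n l where m: "m = n \<oplus>\<^bsub>M\<^esub> l" and n: "n \<in> N" and l: "l \<in> L"
            using sum unfolding submodule_sum_def by blast
          have "r \<odot>\<^bsub>M\<^esub> m = r \<odot>\<^bsub>M\<^esub> n \<oplus>\<^bsub>M\<^esub> r \<odot>\<^bsub>M\<^esub> l"
            using m n l Nc Lc rc by (simp add: smult_r_distr subsetD)
          also have "\<dots> = \<zero>\<^bsub>M\<^esub>"
            using r n l assms(8) unfolding K_def Ann_def ann_sub_def by auto
          finally show "r \<odot>\<^bsub>M\<^esub> m = \<zero>\<^bsub>M\<^esub>" .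
        qed
        then show "r \<in> {\<zero>\<^bsub>R\<^esub>}" using assms(3) by (simp add: faithful_module_def)
      qed
    qed
    then have K0: "K = {\<zero>\<^bsub>R\<^esub>}" using assms(7) Kid by (simp add: essential_ideal_def)
    obtain J where J: "ideal J R" "L = ann_sub R M J"
      using assms(5) L by (auto simp: comultiplication_module_def)
    have Jc: "J \<subseteq> carrier R" using J(1) by (rule ideal.axioms(1)[THEN additive_subgroup.a_subset])
    have "J \<subseteq> K" unfolding K_def Ann_def using J Jc by (auto simp: ann_sub_def)
    show "L = carrier M"
    proof
      show "L \<subseteq> carrier M" by fact
      show "carrier M \<subseteq> L"
      proof
        fix m assume m: "m \<in> carrier M"
        have "\<forall>a\<in>J. a \<odot>\<^bsub>M\<^esub> m = \<zero>\<^bsub>M\<^esub>" using \<open>J \<subseteq> K\<close> K0 m by auto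
        then show "m \<in> L" using J(2) m by (simp add: ann_sub_def)
      qed
    qed
  qed
qed

end
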